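(* For every positive integer $n$, $w_n(x)=s_n(x)$ as polynomials, where $$w_n(x)=\sum_{k=1}^n w(n,k)x^{k-1},\qquad s_n(x)=\sum_{k=1}^nN(n,k)x^{k-1}(x+1)^{n-k}.$$
   Context: For $n\ge k\ge1$, $N(n,k)=\frac1n\binom{n}{k}\binom{n}{k-1}$ (Narayana number) and $w(n,k)=\frac1k\binom{n-1}{k-1}\binom{n+k}{k-1}$. *)

theory Defs
  imports "HOL-Computational_Algebra.Polynomial"
begin

definition narayana :: "nat \<Rightarrow> nat \<Rightarrow> rat" where
  "narayana n k = (1 / of_nat n) * of_nat (n choose k) * of_nat (n choose (k - 1))"

definition wcoef :: "nat \<Rightarrow> nat \<Rightarrow> rat" where
  "wcoef n k = (1 / of_nat k) * of_nat ((n - 1) choose (k - 1)) * of_nat ((n + k) choose (k - 1))"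

definition w_poly :: "nat \<Rightarrow> rat poly" where
  "w_poly n = (\<Sum>k=1..n. monom (wcoef n k) (k - 1))"

definition s_poly :: "nat \<Rightarrow> rat poly" where
  "s_poly n = (\<Sum>k=1..n. smult (narayana n k) ([:0, 1:] ^ (k - 1) * [:1, 1:] ^ (n - k)))"

end

theory Submission
  imports Defs
begin

lemma coeff_11_pow: "coeff ([:1, 1:] ^ m) l = (of_nat (m choose l) :: rat)"
proof (cases "l \<le> m")
  case True
  then show ?thesis by (simp add: coeff_linear_poly_power)
next
  case False
  have "degree ([:1, 1::rat:] ^ m) \<le> m"
    by (rule order.trans[OF degree_power_le]) simp
  then have "coeff ([:1, 1::rat:] ^ m) l = 0" using False by (intro coeff_eq_0) simp
  then show ?thesis using False by simp
qed

lemma coeff_w: "coeff (w_poly n) i = (if i < n then wcoef n (i+1) else 0)"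
proof -
  have "coeff (w_poly n) i = (\<Sum>k=1..n. if k = i + 1 then wcoef n k else 0)"
    unfolding w_poly_def coeff_sum coeff_monom
    by (intro sum.cong) auto
  also have "\<dots> = (if i < n then wcoef n (i+1) else 0)"
    by (subst sum.delta) auto
  finally show ?thesis .
qed

lemma coeff_s: "coeff (s_poly n) i =
   (\<Sum>k=1..n. narayana n k * (if k - 1 \<le> i then of_nat ((n-k) choose (i-(k-1))) else 0))"
  unfolding s_poly_def coeff_sum coeff_smult
  by (intro sum.cong refl) (simp add: monom_altdef[of 1, simplified, symmetric] coeff_monom_mult coeff_11_pow)

lemma nat_ident:
  assumes "1 \<le> j" "j \<le> n"
  shows "(\<Sum>k=1..j. (n choose k) * (n choose (k-1)) * ((n-k) choose (j-k)))
         = (n choose j) * ((n+j) choose (j-1))"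
proof -
  have "(\<Sum>k=1..j. (n choose k) * (n choose (k-1)) * ((n-k) choose (j-k)))
      = (\<Sum>k=1..j. (n choose j) * ((j choose k) * (n choose (k-1))))"
  proof (intro sum.cong refl)
    fix k assume "k \<in> {1..j}"
    then have "(n choose j) * (j choose k) = (n choose k) * ((n-k) choose (j-k))"
      using assms by (intro choose_mult) auto
    then show "(n choose k) * (n choose (k-1)) * ((n-k) choose (j-k))
        = (n choose j) * ((j choose k) * (n choose (k-1)))"
      by (metis mult.assoc mult.commute)
  qed
  also have "\<dots> = (n choose j) * (\<Sum>k=1..j. (j choose k) * (n choose (k-1)))"
    by (simp add: sum_distrib_left)
  also have "(\<Sum>k=1..j. (j choose k) * (n choose (k-1))) = (\<Sum>m\<le>j-1. (n choose m) * (j choose ((j-1) - m)))"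
  proof -
    have "(\<Sum>k=1..j. (j choose k) * (n choose (k-1))) = (\<Sum>m=0..j-1. (j choose (m+1)) * (n choose m))"
    proof -
      obtain j' where jj: "j = Suc j'" using assms by (cases j) auto
      show ?thesis unfolding jj using sum.shift_bounds_cl_Suc_ivl[of "\<lambda>k. (Suc j' choose k) * (n choose (k-1))" 0 j']
        by simp
    qed
    also have "\<dots> = (\<Sum>m\<le>j-1. (n choose m) * (j choose ((j-1) - m)))"
      unfolding atLeast0AtMost
    proof (intro sum.cong refl)
      fix m assume "m \<in> {..j-1}"
      then have "j choose (m+1) = j choose (j - (m+1))" using assms
        by (intro binomial_symmetric) auto
      then show "(j choose (m+1)) * (n choose m) = (n choose m) * (j choose ((j-1) - m))"
        using assms by simp
    qed
    finally show ?thesis .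
  qed
  also have "\<dots> = (n + j) choose (j-1)" by (rule vandermonde)
  finally show ?thesis .
qed

theorem lemma4p5:
  fixes n :: nat
  assumes "n \<ge> 1"
  shows "w_poly n = s_poly n"
proof (rule poly_eqI)
  fix i
  show "coeff (w_poly n) i = coeff (s_poly n) i"
  proof (cases "i < n")
    case False
    have "coeff (s_poly n) i = 0"
      unfolding coeff_s
    proof (intro sum.neutral ballI)
      fix k assume "k \<in> {1..n}"
      then have "(n-k) choose (i-(k-1)) = 0" using False by (intro binomial_eq_0) auto
      then show "narayana n k * (if k - 1 \<le> i then of_nat ((n-k) choose (i-(k-1))) else 0) = 0"
        by simp
    qed
    then show ?thesis using False by (simp add: coeff_w)
  next
    case True
    define j where "j = i + 1"
    have j: "1 \<le> j" "j \<le> n" using True j_def by auto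
    have "coeff (s_poly n) i =
       (\<Sum>k=1..j. narayana n k * (if k - 1 \<le> i then of_nat ((n-k) choose (i-(k-1))) else 0))"
      unfolding coeff_s using j j_def
      by (intro sum.mono_neutral_right) auto
    also have "\<dots> = (\<Sum>k=1..j. (1 / of_nat n) * of_nat ((n choose k) * (n choose (k-1)) * ((n-k) choose (j-k))))"
      by (intro sum.cong refl) (auto simp: narayana_def j_def)
    also have "\<dots> = (1 / of_nat n) * of_nat (\<Sum>k=1..j. (n choose k) * (n choose (k-1)) * ((n-k) choose (j-k)))"
      by (simp add: sum_distrib_left)
    also have "\<dots> = (1 / of_nat n) * of_nat ((n choose j) * ((n+j) choose (j-1)))"
      using nat_ident[OF j] by simp
    also have "\<dots> = wcoef n j"
    proof -
      have "n * ((n-1) choose (j-1)) = (n choose j) * j"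
        using Suc_times_binomial_eq[of "n-1" "j-1"] j by simp
      then have e: "(of_nat n :: rat) * of_nat ((n-1) choose (j-1)) = of_nat (n choose j) * of_nat j"
        by (metis of_nat_mult)
      have "n > 0" "j > 0" using j by auto
      then show ?thesis unfolding wcoef_def using e
        by (simp add: field_simps)
    qed
    finally show ?thesis using True by (simp add: coeff_w j_def)
  qed
qed

end
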